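(* Let $A$ be a finitely generated associative $\mathbb{C}$-algebra. The product $a\star b:=\frac12(ab+ba)$ is associative on $A_\star:=(A/M_3(A),\star)$, and for every $k\ge1$ the action $a\star n:=\frac12(an+na)$, for $a\in A_\star$, $n\in N_k(A)$, is well-defined and makes $N_k(A)$ into an $A_\star$-module.
   Context: For an associative algebra $A$: $L_1=A$, $L_k=[A,L_{k-1}]$, $M_k=AL_kA$ (two-sided ideal generated by $L_k$), $N_k=M_k/M_{k+1}$. *)

theory Defs
  imports Complex_Main
begin

definition complex_algebra :: "(complex \<Rightarrow> 'a::ring_1 \<Rightarrow> 'a) \<Rightarrow> bool" where
  "complex_algebra scale \<longleftrightarrow> vector_space scale \<and>
     (\<forall>c x y. scale c (x * y) = scale c x * y \<and> scale c (x * y) = x * scale c y)"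

inductive_set gen_subalg :: "(complex \<Rightarrow> 'a::ring_1 \<Rightarrow> 'a) \<Rightarrow> 'a set \<Rightarrow> 'a set"
  for scale :: "complex \<Rightarrow> 'a \<Rightarrow> 'a" and S :: "'a set" where
  gen: "x \<in> S \<Longrightarrow> x \<in> gen_subalg scale S"
| one: "1 \<in> gen_subalg scale S"
| add: "x \<in> gen_subalg scale S \<Longrightarrow> y \<in> gen_subalg scale S \<Longrightarrow> x + y \<in> gen_subalg scale S"
| smul: "x \<in> gen_subalg scale S \<Longrightarrow> scale c x \<in> gen_subalg scale S"
| mult: "x \<in> gen_subalg scale S \<Longrightarrow> y \<in> gen_subalg scale S \<Longrightarrow> x * y \<in> gen_subalg scale S"

definition fin_gen_algebra :: "(complex \<Rightarrow> 'a::ring_1 \<Rightarrow> 'a) \<Rightarrow> bool" where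
  "fin_gen_algebra scale \<longleftrightarrow> (\<exists>S. finite S \<and> gen_subalg scale S = UNIV)"

text \<open>Lower central series: L 1 = A, L (k+1) = [A, L k] (complex linear span of commutators).
  The value at 0 is a junk value (set to UNIV).\<close>
fun LCS :: "(complex \<Rightarrow> 'a::ring_1 \<Rightarrow> 'a) \<Rightarrow> nat \<Rightarrow> 'a set" where
  "LCS scale 0 = UNIV"
| "LCS scale (Suc 0) = UNIV"
| "LCS scale (Suc (Suc n)) =
     module.span scale {a * l - l * a | a l. l \<in> LCS scale (Suc n)}"

text \<open>M k = A L_k A, the two-sided ideal generated by L_k (A is unital).\<close>
definition Mid :: "(complex \<Rightarrow> 'a::ring_1 \<Rightarrow> 'a) \<Rightarrow> nat \<Rightarrow> 'a set" where
  "Mid scale k = module.span scale {a * l * b | a l b. l \<in> LCS scale k}"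

definition jstar :: "(complex \<Rightarrow> 'a::ring_1 \<Rightarrow> 'a) \<Rightarrow> 'a \<Rightarrow> 'a \<Rightarrow> 'a" where
  "jstar scale a b = scale (1/2) (a * b + b * a)"

end

theory Submission
  imports Defs
begin

locale calg =
  fixes scale :: "complex \<Rightarrow> 'a::ring_1 \<Rightarrow> 'a"
  assumes ca: "complex_algebra scale"
begin

sublocale vector_space scale using ca unfolding complex_algebra_def by auto

lemma ml: "scale c x * y = scale c (x * y)" using ca unfolding complex_algebra_def by metis
lemma mr: "x * scale c y = scale c (x * y)" using ca unfolding complex_algebra_def by metis

lemma span_lin:
  assumes "x \<in> span S" "subspace V" "\<And>s. s \<in> S \<Longrightarrow> g s \<in> V"
    "\<And>a b. g (a+b) = g a + g b" "\<And>c a. g (scale c a) = scale c (g a)"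
  shows "g x \<in> V"
proof -
  have g0: "g 0 = 0" using assms(4)[of 0 0] by simp
  have "subspace {x. g x \<in> V}"
    using assms(2,4,5) g0 unfolding subspace_def by auto
  then show ?thesis using span_induct[OF assms(1), of "\<lambda>x. g x \<in> V"] assms(3) by auto
qed

lemma Mid_sub: "subspace (Mid scale k)" unfolding Mid_def by simp

lemma LCS_sub: "subspace (LCS scale k)"
proof (cases k)
  case 0 then show ?thesis by simp
next
  case (Suc n) then show ?thesis by (cases n) simp_all
qed

lemma Mid_left: "m \<in> Mid scale k \<Longrightarrow> x * m \<in> Mid scale k"
  unfolding Mid_def
proof (rule span_lin[where g="\<lambda>m. x * m"])
  fix s assume "s \<in> {a * l * b | a l b. l \<in> LCS scale k}"
  then obtain a l b where s: "s = a * l * b" and l: "l \<in> LCS scale k" by blast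
  have "x * s = (x * a) * l * b" unfolding s by (simp only: mult.assoc)
  then show "x * s \<in> span {a * l * b | a l b. l \<in> LCS scale k}"
    using l by (auto intro!: span_base)
qed (simp_all add: mr distrib_left)

lemma Mid_right: "m \<in> Mid scale k \<Longrightarrow> m * x \<in> Mid scale k"
  unfolding Mid_def
proof (rule span_lin[where g="\<lambda>m. m * x"])
  fix s assume "s \<in> {a * l * b | a l b. l \<in> LCS scale k}"
  then obtain a l b where s: "s = a * l * b" and l: "l \<in> LCS scale k" by blast
  have "s * x = a * l * (b * x)" unfolding s by (simp only: mult.assoc)
  then show "s * x \<in> span {a * l * b | a l b. l \<in> LCS scale k}"
    using l by (auto intro!: span_base)
qed (simp_all add: ml distrib_right)

lemma LCS_Mid: "l \<in> LCS scale k \<Longrightarrow> l \<in> Mid scale k"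
proof -
  assume l: "l \<in> LCS scale k"
  have "1 * l * 1 \<in> {a * l * b | a l b. l \<in> LCS scale k}" using l by blast
  then have "1 * l * 1 \<in> Mid scale k" unfolding Mid_def by (rule span_base)
  then show ?thesis by (simp only: mult_1_left mult_1_right)
qed

lemma gen_LCS: "1 \<le> k \<Longrightarrow> l \<in> LCS scale k \<Longrightarrow> a * l - l * a \<in> LCS scale (Suc k)"
proof -
  assume k: "1 \<le> k" and l: "l \<in> LCS scale k"
  obtain n where n: "k = Suc n" using k by (cases k) auto
  have "a * l - l * a \<in> {a * l - l * a | a l. l \<in> LCS scale (Suc n)}" using l n by blast
  then have "a * l - l * a \<in> span {a * l - l * a | a l. l \<in> LCS scale (Suc n)}" by (rule span_base)
  then show ?thesis unfolding n by (simp only: LCS.simps(3))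
qed

lemma comm_I: "1 \<le> k \<Longrightarrow> l \<in> LCS scale k \<Longrightarrow> x * l - l * x \<in> Mid scale (Suc k)"
  by (rule LCS_Mid, rule gen_LCS)

lemma Mid_add: "x \<in> Mid scale k \<Longrightarrow> y \<in> Mid scale k \<Longrightarrow> x + y \<in> Mid scale k"
  using Mid_sub subspace_add by blast
lemma Mid_diff: "x \<in> Mid scale k \<Longrightarrow> y \<in> Mid scale k \<Longrightarrow> x - y \<in> Mid scale k"
  using Mid_sub subspace_diff by blast
lemma Mid_neg: "x \<in> Mid scale k \<Longrightarrow> - x \<in> Mid scale k"
  using Mid_sub subspace_neg by blast
lemma Mid_scale: "x \<in> Mid scale k \<Longrightarrow> scale c x \<in> Mid scale k"
  using Mid_sub subspace_scale by blast
lemma LCS_add: "x \<in> LCS scale k \<Longrightarrow> y \<in> LCS scale k \<Longrightarrow> x + y \<in> LCS scale k"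
  using LCS_sub subspace_add by blast
lemma LCS_neg: "x \<in> LCS scale k \<Longrightarrow> - x \<in> LCS scale k"
  using LCS_sub subspace_neg by blast

lemma jacobi:
  assumes k: "1 \<le> k" and z: "z \<in> LCS scale k" and b: "b \<in> LCS scale (Suc (Suc 0))"
  shows "z * b - b * z \<in> LCS scale (Suc (Suc k))"
proof -
  have "b \<in> span {a * l - l * a | a l. l \<in> LCS scale (Suc 0)}" using b by simp
  then show ?thesis
  proof (rule span_lin[where g="\<lambda>b. z * b - b * z"])
    show "subspace (LCS scale (Suc (Suc k)))" by (rule LCS_sub)
  next
    fix s assume "s \<in> {a * l - l * a | a l. l \<in> LCS scale (Suc 0)}"
    then obtain u v where s: "s = u * v - v * u" by blast
    define w1 where "w1 = z * u - u * z"
    define w2 where "w2 = z * v - v * z"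
    have eq: "z * s - s * z = - (v * w1 - w1 * v) + (u * w2 - w2 * u)"
      unfolding s w1_def w2_def by (simp add: algebra_simps)
    have "w1 \<in> LCS scale (Suc k)" unfolding w1_def
      using LCS_neg[OF gen_LCS[OF k z, of u]] by simp
    then have 1: "v * w1 - w1 * v \<in> LCS scale (Suc (Suc k))" using gen_LCS[of "Suc k"] by simp
    have "w2 \<in> LCS scale (Suc k)" unfolding w2_def
      using LCS_neg[OF gen_LCS[OF k z, of v]] by simp
    then have 2: "u * w2 - w2 * u \<in> LCS scale (Suc (Suc k))" using gen_LCS[of "Suc k"] by simp
    show "z * s - s * z \<in> LCS scale (Suc (Suc k))"
      unfolding eq using LCS_add[OF LCS_neg[OF 1] 2] .
  qed (auto simp: algebra_simps ml mr)
qed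

lemma LCS3_Mid2: "t \<in> LCS scale (Suc (Suc (Suc 0))) \<Longrightarrow> t \<in> Mid scale (Suc (Suc 0))"
proof -
  assume "t \<in> LCS scale (Suc (Suc (Suc 0)))"
  then have "t \<in> span {a * l - l * a | a l. l \<in> LCS scale (Suc (Suc 0))}"
    by (simp only: LCS.simps(3))
  then show ?thesis
  proof (rule span_subspace_induct[OF _ Mid_sub])
    fix x assume "x \<in> {a * l - l * a | a l. l \<in> LCS scale (Suc (Suc 0))}"
    then obtain a l where x: "x = a * l - l * a" and l: "l \<in> LCS scale (Suc (Suc 0))" by blast
    show "x \<in> Mid scale (Suc (Suc 0))" unfolding x
      by (intro Mid_diff Mid_left Mid_right LCS_Mid l)
  qed
qed

lemma keyT:
  assumes k: "1 \<le> k" and t: "t \<in> LCS scale (Suc (Suc (Suc 0)))" and l: "l \<in> LCS scale k"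
  shows "t * l \<in> Mid scale (Suc k)"
proof (cases "k = 1")
  case True
  then show ?thesis using Mid_right[OF LCS3_Mid2[OF t]] by simp
next
  case False
  then obtain k' where kk: "k = Suc k'" and k': "1 \<le> k'" using k by (cases k) auto
  have "t \<in> span {a * l - l * a | a l. l \<in> LCS scale (Suc (Suc 0))}" using t by simp
  then show ?thesis
  proof (rule span_lin[where g="\<lambda>t. t * l"])
    fix t0 assume "t0 \<in> {a * l - l * a | a l. l \<in> LCS scale (Suc (Suc 0))}"
    then obtain d b where t0: "t0 = d * b - b * d" and b: "b \<in> LCS scale (Suc (Suc 0))" by blast
    obtain k'' where k'': "k' = Suc k''" using k' by (cases k') auto
    have "l \<in> span {a * l - l * a | a l. l \<in> LCS scale k'}" using l unfolding kk k''
      by (simp only: LCS.simps(3))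
    then show "t0 * l \<in> Mid scale (Suc k)"
    proof (rule span_lin[where g="\<lambda>l. t0 * l"])
      fix l0 assume "l0 \<in> {a * l - l * a | a l. l \<in> LCS scale k'}"
      then obtain c z where l0: "l0 = c * z - z * c" and z: "z \<in> LCS scale k'" by blast
      have eq: "t0 * l0 = - (d * (z * (b * c) - (b * c) * z) - (z * (b * c) - (b * c) * z) * d)
         - (z * b - b * z) * (c * d - d * c) - (z * b - b * z) * d * c + d * (z * b - b * z) * c
         + b * (d * (z * c - c * z) - (z * c - c * z) * d)"
        unfolding t0 l0 by (simp add: algebra_simps)
      have A: "z * (b * c) - (b * c) * z \<in> LCS scale k"
        using LCS_neg[OF gen_LCS[OF k' z, of "b*c"]] kk by simp
      have A': "d * (z * (b * c) - (b * c) * z) - (z * (b * c) - (b * c) * z) * d \<in> Mid scale (Suc k)"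
        using comm_I[OF k A] by simp
      have B: "z * b - b * z \<in> Mid scale (Suc k)"
        using LCS_Mid[OF jacobi[OF k' z b]] kk by simp
      have C: "z * c - c * z \<in> LCS scale k"
        using LCS_neg[OF gen_LCS[OF k' z, of "c"]] kk by simp
      have C': "d * (z * c - c * z) - (z * c - c * z) * d \<in> Mid scale (Suc k)"
        using comm_I[OF k C] by simp
      show "t0 * l0 \<in> Mid scale (Suc k)" unfolding eq
        using Mid_add[OF Mid_add[OF Mid_diff[OF Mid_diff[OF Mid_neg[OF A'] Mid_right[OF B]] Mid_right[OF Mid_right[OF B]]] Mid_right[OF Mid_left[OF B]]] Mid_left[OF C']]
        by simp
    qed (auto simp: Mid_sub algebra_simps ml mr)
  qed (auto simp: Mid_sub algebra_simps ml mr)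
qed

lemma Qgen:
  assumes k: "1 \<le> k" and t: "t \<in> LCS scale (Suc (Suc (Suc 0)))" and l: "l \<in> LCS scale k"
  shows "(x * t * y) * (p * l * q) \<in> Mid scale (Suc k) \<and> (p * l * q) * (x * t * y) \<in> Mid scale (Suc k)"
proof
  have T: "t * l \<in> Mid scale (Suc k)" using keyT[OF k t l] .
  have e1: "(x * t * y) * (p * l * q) = x * (t * ((y * p) * l - l * (y * p)) + (t * l) * (y * p)) * q"
    by (simp add: algebra_simps)
  show "(x * t * y) * (p * l * q) \<in> Mid scale (Suc k)" unfolding e1
    by (rule Mid_right[OF Mid_left[OF Mid_add[OF Mid_left[OF comm_I[OF k l, of "y*p"], of t] Mid_right[OF T, of "y*p"]], of x], of q])
  have e2: "(p * l * q) * (x * t * y) = p * (- (((q * x) * l - l * (q * x)) * t) + (q * x) * (t * l - (t * l - l * t))) * y"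
    by (simp add: algebra_simps)
  show "(p * l * q) * (x * t * y) \<in> Mid scale (Suc k)" unfolding e2
    by (rule Mid_right[OF Mid_left[OF Mid_add[OF Mid_neg[OF Mid_right[OF comm_I[OF k l, of "q*x"], of t]]
       Mid_left[OF Mid_diff[OF T comm_I[OF k l, of t]], of "q*x"]], of p], of y])
qed

lemma Q1:
  assumes k: "1 \<le> k" and m: "m \<in> Mid scale (Suc (Suc (Suc 0)))" and n: "n \<in> Mid scale k"
  shows "m * n \<in> Mid scale (Suc k)"
proof -
  have "m \<in> span {a * l * b | a l b. l \<in> LCS scale (Suc (Suc (Suc 0)))}" using m by (simp add: Mid_def)
  then show ?thesis
  proof (rule span_lin[where g="\<lambda>m. m * n"])
    fix m0 assume "m0 \<in> {a * l * b | a l b. l \<in> LCS scale (Suc (Suc (Suc 0)))}"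
    then obtain x t y where m0: "m0 = x * t * y" and t: "t \<in> LCS scale (Suc (Suc (Suc 0)))" by blast
    have "n \<in> span {a * l * b | a l b. l \<in> LCS scale k}" using n by (simp add: Mid_def)
    then show "m0 * n \<in> Mid scale (Suc k)"
    proof (rule span_lin[where g="\<lambda>n. m0 * n"])
      fix n0 assume "n0 \<in> {a * l * b | a l b. l \<in> LCS scale k}"
      then obtain p l q where n0: "n0 = p * l * q" and l: "l \<in> LCS scale k" by blast
      show "m0 * n0 \<in> Mid scale (Suc k)" unfolding m0 n0 using Qgen[OF k t l] by blast
    qed (auto simp: Mid_sub algebra_simps ml mr)
  qed (auto simp: Mid_sub algebra_simps ml mr)
qed

lemma Q2:
  assumes k: "1 \<le> k" and m: "m \<in> Mid scale (Suc (Suc (Suc 0)))" and n: "n \<in> Mid scale k"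
  shows "n * m \<in> Mid scale (Suc k)"
proof -
  have "m \<in> span {a * l * b | a l b. l \<in> LCS scale (Suc (Suc (Suc 0)))}" using m by (simp add: Mid_def)
  then show ?thesis
  proof (rule span_lin[where g="\<lambda>m. n * m"])
    fix m0 assume "m0 \<in> {a * l * b | a l b. l \<in> LCS scale (Suc (Suc (Suc 0)))}"
    then obtain x t y where m0: "m0 = x * t * y" and t: "t \<in> LCS scale (Suc (Suc (Suc 0)))" by blast
    have "n \<in> span {a * l * b | a l b. l \<in> LCS scale k}" using n by (simp add: Mid_def)
    then show "n * m0 \<in> Mid scale (Suc k)"
    proof (rule span_lin[where g="\<lambda>n. n * m0"])
      fix n0 assume "n0 \<in> {a * l * b | a l b. l \<in> LCS scale k}"
      then obtain p l q where n0: "n0 = p * l * q" and l: "l \<in> LCS scale k" by blast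
      show "n0 * m0 \<in> Mid scale (Suc k)" unfolding m0 n0 using Qgen[OF k t l] by blast
    qed (auto simp: Mid_sub algebra_simps ml mr)
  qed (auto simp: Mid_sub algebra_simps ml mr)
qed

lemma R:
  assumes k: "1 \<le> k" and n: "n \<in> Mid scale k"
  shows "b * (a * n - n * a) - (a * n - n * a) * b \<in> Mid scale (Suc k)"
proof -
  have "n \<in> span {a * l * b | a l b. l \<in> LCS scale k}" using n by (simp add: Mid_def)
  then show ?thesis
  proof (rule span_lin[where g="\<lambda>n. b * (a * n - n * a) - (a * n - n * a) * b"])
    fix n0 assume "n0 \<in> {a * l * b | a l b. l \<in> LCS scale k}"
    then obtain x l y where n0: "n0 = x * l * y" and l: "l \<in> LCS scale k" by blast
    define w where "w = x * y"
    define s where "s = a * w - w * a"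
    define r where "r = a * l - l * a"
    define e where "e = x * (l * y - y * l)"
    have s: "s \<in> LCS scale (Suc (Suc 0))" unfolding s_def using gen_LCS[of "Suc 0" w a] by simp
    have bs: "b * s - s * b \<in> LCS scale (Suc (Suc (Suc 0)))" using gen_LCS[of "Suc (Suc 0)" s b, OF _ s] by simp
    have r: "r \<in> Mid scale (Suc k)" unfolding r_def using comm_I[OF k l] .
    have e: "e \<in> Mid scale (Suc k)" unfolding e_def
      using Mid_left[OF Mid_neg[OF comm_I[OF k l, of y]], of x] by (simp add: algebra_simps)
    have eq: "b * (a * n0 - n0 * a) - (a * n0 - n0 * a) * b =
       (b * s - s * b) * l + s * (b * l - l * b) + (b * (w * r) - (w * r) * b)
       + (b * (a * e - e * a) - (a * e - e * a) * b)"
      unfolding n0 w_def s_def r_def e_def by (simp add: algebra_simps)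
    have wr: "w * r \<in> Mid scale (Suc k)" using Mid_left[OF r, of w] .
    have ae: "a * e - e * a \<in> Mid scale (Suc k)" using Mid_diff[OF Mid_left[OF e, of a] Mid_right[OF e, of a]] .
    show "b * (a * n0 - n0 * a) - (a * n0 - n0 * a) * b \<in> Mid scale (Suc k)" unfolding eq
      by (rule Mid_add[OF Mid_add[OF Mid_add[OF keyT[OF k bs l] Mid_left[OF comm_I[OF k l, of b], of s]]
         Mid_diff[OF Mid_left[OF wr, of b] Mid_right[OF wr, of b]]]
         Mid_diff[OF Mid_left[OF ae, of b] Mid_right[OF ae, of b]]])
  qed (auto simp: Mid_sub algebra_simps ml mr)
qed

lemma js_diff: "jstar scale a b - jstar scale a' b' = scale (1/2) ((a*b + b*a) - (a'*b' + b'*a'))"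
  unfolding jstar_def by (simp add: scale_right_diff_distrib)

lemma jj1: "jstar scale (jstar scale a b) c = scale (1/4) ((a*b+b*a)*c + c*(a*b+b*a))"
  unfolding jstar_def by (simp add: ml mr scale_right_distrib[symmetric])

lemma jj2: "jstar scale a (jstar scale b c) = scale (1/4) (a*(b*c+c*b) + (b*c+c*b)*a)"
  unfolding jstar_def by (simp add: ml mr scale_right_distrib[symmetric])

lemma jassoc: "jstar scale (jstar scale a b) c - jstar scale a (jstar scale b c)
   = scale (1/4) (b * (a * c - c * a) - (a * c - c * a) * b)"
proof -
  have "(a*b+b*a)*c + c*(a*b+b*a) - (a*(b*c+c*b) + (b*c+c*b)*a) = b * (a * c - c * a) - (a * c - c * a) * b"
    by (simp add: algebra_simps)
  then show ?thesis unfolding jj1 jj2 by (simp add: scale_right_diff_distrib[symmetric])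
qed

lemma main:
  "(\<forall>a a' b b'. a - a' \<in> Mid scale 3 \<longrightarrow> b - b' \<in> Mid scale 3 \<longrightarrow>
        jstar scale a b - jstar scale a' b' \<in> Mid scale 3)
   \<and> (\<forall>a b c. jstar scale (jstar scale a b) c - jstar scale a (jstar scale b c) \<in> Mid scale 3)
   \<and> (\<forall>k\<ge>1.
        (\<forall>a n. n \<in> Mid scale k \<longrightarrow> jstar scale a n \<in> Mid scale k)
      \<and> (\<forall>a a' n n'. a - a' \<in> Mid scale 3 \<longrightarrow> n \<in> Mid scale k \<longrightarrow> n' \<in> Mid scale k \<longrightarrow>
            n - n' \<in> Mid scale (k + 1) \<longrightarrow>
            jstar scale a n - jstar scale a' n' \<in> Mid scale (k + 1))
      \<and> (\<forall>a b n. n \<in> Mid scale k \<longrightarrow>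
            jstar scale (jstar scale a b) n - jstar scale a (jstar scale b n) \<in> Mid scale (k + 1))
      \<and> (\<forall>n. n \<in> Mid scale k \<longrightarrow> jstar scale 1 n = n)
      \<and> (\<forall>a b n. n \<in> Mid scale k \<longrightarrow> jstar scale (a + b) n = jstar scale a n + jstar scale b n)
      \<and> (\<forall>a n m. n \<in> Mid scale k \<longrightarrow> m \<in> Mid scale k \<longrightarrow>
            jstar scale a (n + m) = jstar scale a n + jstar scale a m)
      \<and> (\<forall>c a n. n \<in> Mid scale k \<longrightarrow>
            jstar scale (scale c a) n = scale c (jstar scale a n)
          \<and> jstar scale a (scale c n) = scale c (jstar scale a n)))"
proof (intro conjI allI impI)
  fix a a' b b' assume h: "a - a' \<in> Mid scale 3" "b - b' \<in> Mid scale 3"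
  have eq: "(a*b + b*a) - (a'*b' + b'*a') = (a - a') * b + a' * (b - b') + (b - b') * a + b' * (a - a')"
    by (simp add: algebra_simps)
  show "jstar scale a b - jstar scale a' b' \<in> Mid scale 3" unfolding js_diff eq
    by (rule Mid_scale[OF Mid_add[OF Mid_add[OF Mid_add[OF Mid_right[OF h(1), of b] Mid_left[OF h(2), of a']] Mid_right[OF h(2), of a]] Mid_left[OF h(1), of b']]])
next
  fix a b c
  have "b * (a * c - c * a) - (a * c - c * a) * b \<in> LCS scale 3"
  proof -
    have "a * c - c * a \<in> LCS scale (Suc (Suc 0))" using gen_LCS[of "Suc 0" c a] by simp
    then have "b * (a * c - c * a) - (a * c - c * a) * b \<in> LCS scale (Suc (Suc (Suc 0)))"
      using gen_LCS[of "Suc (Suc 0)" "a * c - c * a" b] by simp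
    then show ?thesis by (simp add: numeral_3_eq_3)
  qed
  then show "jstar scale (jstar scale a b) c - jstar scale a (jstar scale b c) \<in> Mid scale 3"
    unfolding jassoc by (rule Mid_scale[OF LCS_Mid])
next
  fix k :: nat and a n assume k: "1 \<le> k" and n: "n \<in> Mid scale k"
  show "jstar scale a n \<in> Mid scale k" unfolding jstar_def
    by (rule Mid_scale[OF Mid_add[OF Mid_left[OF n, of a] Mid_right[OF n, of a]]])
next
  fix k :: nat and a a' n n' assume k: "1 \<le> k" and h: "a - a' \<in> Mid scale 3" "n \<in> Mid scale k"
    "n' \<in> Mid scale k" "n - n' \<in> Mid scale (k + 1)"
  have h1: "a - a' \<in> Mid scale (Suc (Suc (Suc 0)))" using h(1) by (simp add: numeral_3_eq_3)
  have eq: "(a*n + n*a) - (a'*n' + n'*a') = (a - a') * n + n * (a - a') + a' * (n - n') + (n - n') * a'"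
    by (simp add: algebra_simps)
  have h4: "n - n' \<in> Mid scale (Suc k)" using h(4) by simp
  have "jstar scale a n - jstar scale a' n' \<in> Mid scale (Suc k)" unfolding js_diff eq
    by (rule Mid_scale[OF Mid_add[OF Mid_add[OF Mid_add[OF Q1[OF k h1 h(2)] Q2[OF k h1 h(2)]] Mid_left[OF h4, of a']] Mid_right[OF h4, of a']]])
  then show "jstar scale a n - jstar scale a' n' \<in> Mid scale (k + 1)" by simp
next
  fix k :: nat and a b n assume k: "1 \<le> k" and n: "n \<in> Mid scale k"
  have "jstar scale (jstar scale a b) n - jstar scale a (jstar scale b n)
     = scale (1/4) (b * (a * n - n * a) - (a * n - n * a) * b)" by (rule jassoc)
  then show "jstar scale (jstar scale a b) n - jstar scale a (jstar scale b n) \<in> Mid scale (k + 1)"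
    using R[OF k n, of b a] by (simp add: Mid_scale)
next
  fix n :: 'a
  have "scale (1/2) (n + n) = scale (1/2 + 1/2) n" by (simp only: scale_left_distrib scale_right_distrib)
  then show "jstar scale 1 n = n" unfolding jstar_def by simp
next
  fix a b n :: 'a
  show "jstar scale (a + b) n = jstar scale a n + jstar scale b n"
    unfolding jstar_def by (simp add: algebra_simps)
next
  fix a n m :: 'a
  show "jstar scale a (n + m) = jstar scale a n + jstar scale a m"
    unfolding jstar_def by (simp add: algebra_simps)
next
  fix c and a n :: 'a
  show "jstar scale (scale c a) n = scale c (jstar scale a n)"
    unfolding jstar_def by (simp add: ml mr scale_right_distrib[symmetric] mult.commute)
  show "jstar scale a (scale c n) = scale c (jstar scale a n)"
    unfolding jstar_def by (simp add: ml mr scale_right_distrib[symmetric] mult.commute)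
qed

end

theorem proposition2p6:
  fixes scale :: "complex \<Rightarrow> 'a::ring_1 \<Rightarrow> 'a"
  assumes "complex_algebra scale"
      and "fin_gen_algebra scale"
  shows
    \<comment> \<open>the star product is well defined on A/M_3 and associative there\<close>
    "(\<forall>a a' b b'. a - a' \<in> Mid scale 3 \<longrightarrow> b - b' \<in> Mid scale 3 \<longrightarrow>
        jstar scale a b - jstar scale a' b' \<in> Mid scale 3)
   \<and> (\<forall>a b c. jstar scale (jstar scale a b) c - jstar scale a (jstar scale b c) \<in> Mid scale 3)
   \<and> (\<forall>k\<ge>1.
        \<comment> \<open>the action maps M_k into M_k\<close>
        (\<forall>a n. n \<in> Mid scale k \<longrightarrow> jstar scale a n \<in> Mid scale k)
        \<comment> \<open>well defined on A/M_3 times M_k/M_(k+1)\<close>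
      \<and> (\<forall>a a' n n'. a - a' \<in> Mid scale 3 \<longrightarrow> n \<in> Mid scale k \<longrightarrow> n' \<in> Mid scale k \<longrightarrow>
            n - n' \<in> Mid scale (k + 1) \<longrightarrow>
            jstar scale a n - jstar scale a' n' \<in> Mid scale (k + 1))
        \<comment> \<open>module axioms modulo M_(k+1)\<close>
      \<and> (\<forall>a b n. n \<in> Mid scale k \<longrightarrow>
            jstar scale (jstar scale a b) n - jstar scale a (jstar scale b n) \<in> Mid scale (k + 1))
      \<and> (\<forall>n. n \<in> Mid scale k \<longrightarrow> jstar scale 1 n = n)
      \<and> (\<forall>a b n. n \<in> Mid scale k \<longrightarrow> jstar scale (a + b) n = jstar scale a n + jstar scale b n)
      \<and> (\<forall>a n m. n \<in> Mid scale k \<longrightarrow> m \<in> Mid scale k \<longrightarrow>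
            jstar scale a (n + m) = jstar scale a n + jstar scale a m)
      \<and> (\<forall>c a n. n \<in> Mid scale k \<longrightarrow>
            jstar scale (scale c a) n = scale c (jstar scale a n)
          \<and> jstar scale a (scale c n) = scale c (jstar scale a n)))"
proof -
  interpret calg scale using assms(1) by (rule calg.intro)
  show ?thesis by (rule main)
qed

end
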